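(* Let $P$ be a section of width three. The following are equivalent: (1) $P$ is nice; (2) $P$ contains no retractable point; (3) $P$ contains no irreducible point.
   Context: All posets are finite. Level sets: $P(0)=\min P$, $P(k+1)=\min(P\setminus\bigcup_{i\le k}P(i))$. A section of width three is a poset $P$ of height $h_P\ge1$ with carrier $\{c_{k,j}:k\in[0,h_P],j\in\{0,1,2\}\}$ such that: $c_{0,j}<\dots<c_{h_P,j}$ is a chain for each $j$; each $\{c_{k,0},c_{k,1},c_{k,2}\}$ is an antichain; $c_{k,i}<c_{\ell,j}\Rightarrow c_{k,i+1}<c_{\ell,j+1}$ for all $k,\ell,i,j$ (indices mod 3); and for no $k$ is every point of $P(k)$ below every point of $P(k+1)$. It is nice if for all $x<y$ in $P$: $\{z:z>x\}\not\subseteq\{z:z\ge y\}$ and $\{z:z<y\}\not\subseteq\{z:z\le x\}$. A point $a\in P$ is retractable if $P\setminus\{a\}$ is a retract of $P$ (image of an idempotent order-preserving self-map). A point is irreducible if it has exactly one lower cover or exactly one upper cover. *)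

theory Defs
  imports Main
begin

definition poset_on :: "'a set \<Rightarrow> ('a \<Rightarrow> 'a \<Rightarrow> bool) \<Rightarrow> bool" where
  "poset_on P le \<longleftrightarrow> finite P \<and>
     (\<forall>x\<in>P. le x x) \<and>
     (\<forall>x\<in>P. \<forall>y\<in>P. le x y \<and> le y x \<longrightarrow> x = y) \<and>
     (\<forall>x\<in>P. \<forall>y\<in>P. \<forall>z\<in>P. le x y \<and> le y z \<longrightarrow> le x z)"

definition lt :: "('a \<Rightarrow> 'a \<Rightarrow> bool) \<Rightarrow> 'a \<Rightarrow> 'a \<Rightarrow> bool" where
  "lt le x y \<longleftrightarrow> le x y \<and> x \<noteq> y"

definition minimals :: "('a \<Rightarrow> 'a \<Rightarrow> bool) \<Rightarrow> 'a set \<Rightarrow> 'a set" where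
  "minimals le S = {x \<in> S. \<not> (\<exists>y\<in>S. lt le y x)}"

text \<open>rest P le k = P minus the union of the levels P(0),...,P(k-1).\<close>
fun rest :: "'a set \<Rightarrow> ('a \<Rightarrow> 'a \<Rightarrow> bool) \<Rightarrow> nat \<Rightarrow> 'a set" where
  "rest P le 0 = P"
| "rest P le (Suc k) = rest P le k - minimals le (rest P le k)"

definition level :: "'a set \<Rightarrow> ('a \<Rightarrow> 'a \<Rightarrow> bool) \<Rightarrow> nat \<Rightarrow> 'a set" where
  "level P le k = minimals le (rest P le k)"

definition section3 :: "'a set \<Rightarrow> ('a \<Rightarrow> 'a \<Rightarrow> bool) \<Rightarrow> nat \<Rightarrow> (nat \<Rightarrow> nat \<Rightarrow> 'a) \<Rightarrow> bool" where
  "section3 P le h c \<longleftrightarrow>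
     poset_on P le \<and> h \<ge> 1 \<and>
     P = {c k j | k j. k \<le> h \<and> j < 3} \<and>
     (\<forall>k<h. \<forall>j<3. lt le (c k j) (c (Suc k) j)) \<and>
     (\<forall>k\<le>h. \<forall>i<3. \<forall>j<3. i \<noteq> j \<longrightarrow> \<not> le (c k i) (c k j)) \<and>
     (\<forall>k\<le>h. \<forall>l\<le>h. \<forall>i<3. \<forall>j<3.
        lt le (c k i) (c l j) \<longrightarrow> lt le (c k ((i + 1) mod 3)) (c l ((j + 1) mod 3))) \<and>
     (\<forall>k<h. \<not> (\<forall>x\<in>level P le k. \<forall>y\<in>level P le (Suc k). lt le x y))"

definition nice :: "'a set \<Rightarrow> ('a \<Rightarrow> 'a \<Rightarrow> bool) \<Rightarrow> bool" where
  "nice P le \<longleftrightarrow> (\<forall>x\<in>P. \<forall>y\<in>P. lt le x y \<longrightarrow>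
      \<not> ({z\<in>P. lt le x z} \<subseteq> {z\<in>P. le y z}) \<and>
      \<not> ({z\<in>P. lt le z y} \<subseteq> {z\<in>P. le z x}))"

definition retractable :: "'a set \<Rightarrow> ('a \<Rightarrow> 'a \<Rightarrow> bool) \<Rightarrow> 'a \<Rightarrow> bool" where
  "retractable P le a \<longleftrightarrow> (\<exists>r. (\<forall>x\<in>P. r x \<in> P) \<and>
      (\<forall>x\<in>P. \<forall>y\<in>P. le x y \<longrightarrow> le (r x) (r y)) \<and>
      (\<forall>x\<in>P. r (r x) = r x) \<and>
      r ` P = P - {a})"

definition lower_covers :: "'a set \<Rightarrow> ('a \<Rightarrow> 'a \<Rightarrow> bool) \<Rightarrow> 'a \<Rightarrow> 'a set" where
  "lower_covers P le x = {y\<in>P. lt le y x \<and> \<not> (\<exists>z\<in>P. lt le y z \<and> lt le z x)}"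

definition upper_covers :: "'a set \<Rightarrow> ('a \<Rightarrow> 'a \<Rightarrow> bool) \<Rightarrow> 'a \<Rightarrow> 'a set" where
  "upper_covers P le x = {y\<in>P. lt le x y \<and> \<not> (\<exists>z\<in>P. lt le x z \<and> lt le z y)}"

definition irreducible_pt :: "'a set \<Rightarrow> ('a \<Rightarrow> 'a \<Rightarrow> bool) \<Rightarrow> 'a \<Rightarrow> bool" where
  "irreducible_pt P le a \<longleftrightarrow> card (lower_covers P le a) = 1 \<or> card (upper_covers P le a) = 1"

end

theory Submission
  imports Defs
begin


lemma po_refl: "poset_on P le \<Longrightarrow> x \<in> P \<Longrightarrow> le x x"
  unfolding poset_on_def by (elim conjE) (erule bspec)
lemma po_antisym: "poset_on P le \<Longrightarrow> x \<in> P \<Longrightarrow> y \<in> P \<Longrightarrow> le x y \<Longrightarrow> le y x \<Longrightarrow> x = y"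
proof -
  assume "poset_on P le" "x \<in> P" "y \<in> P" "le x y" "le y x"
  moreover have "\<forall>x\<in>P. \<forall>y\<in>P. le x y \<and> le y x \<longrightarrow> x = y" using \<open>poset_on P le\<close> unfolding poset_on_def by (elim conjE)
  ultimately show "x = y" by blast
qed
lemma po_trans: "poset_on P le \<Longrightarrow> x \<in> P \<Longrightarrow> y \<in> P \<Longrightarrow> z \<in> P \<Longrightarrow> le x y \<Longrightarrow> le y z \<Longrightarrow> le x z"
proof -
  assume "poset_on P le" "x \<in> P" "y \<in> P" "z \<in> P" "le x y" "le y z"
  moreover have "\<forall>x\<in>P. \<forall>y\<in>P. \<forall>z\<in>P. le x y \<and> le y z \<longrightarrow> le x z" using \<open>poset_on P le\<close> unfolding poset_on_def by (elim conjE)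
  ultimately show "le x z" by blast
qed
lemma po_fin: "poset_on P le \<Longrightarrow> finite P"
  unfolding poset_on_def by (elim conjE)

lemma lt_trans: "poset_on P le \<Longrightarrow> x \<in> P \<Longrightarrow> y \<in> P \<Longrightarrow> z \<in> P \<Longrightarrow> lt le x y \<Longrightarrow> lt le y z \<Longrightarrow> lt le x z"
  unfolding lt_def by (metis po_trans po_antisym)
lemma le_lt_trans: "poset_on P le \<Longrightarrow> x \<in> P \<Longrightarrow> y \<in> P \<Longrightarrow> z \<in> P \<Longrightarrow> le x y \<Longrightarrow> lt le y z \<Longrightarrow> lt le x z"
  unfolding lt_def by (metis po_trans po_antisym)
lemma lt_le_trans: "poset_on P le \<Longrightarrow> x \<in> P \<Longrightarrow> y \<in> P \<Longrightarrow> z \<in> P \<Longrightarrow> lt le x y \<Longrightarrow> le y z \<Longrightarrow> lt le x z"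
  unfolding lt_def by (metis po_trans po_antisym)
lemma exists_minimal:
  assumes po: "poset_on P le" and SP: "S \<subseteq> P" and y: "y \<in> S"
  shows "\<exists>u\<in>S. \<forall>w\<in>S. \<not> lt le w u"
proof -
  define m where "m u = card {x\<in>P. lt le x u}" for u
  obtain u where u: "u \<in> S" and umin: "\<And>v. v \<in> S \<Longrightarrow> m u \<le> m v"
    using ex_has_least_nat[of "\<lambda>u. u \<in> S" y m] y by blast
  have "\<forall>w\<in>S. \<not> lt le w u"
  proof (intro ballI notI)
    fix w assume w: "w \<in> S" and wu: "lt le w u"
    have wP: "w \<in> P" and uP: "u \<in> P" using w u SP by auto
    have sub: "{x\<in>P. lt le x w} \<subset> {x\<in>P. lt le x u}"
    proof
      show "{x\<in>P. lt le x w} \<subseteq> {x\<in>P. lt le x u}"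
        using lt_trans[OF po _ wP uP] wu by blast
      show "{x\<in>P. lt le x w} \<noteq> {x\<in>P. lt le x u}"
        using wu wP by (auto simp: lt_def)
    qed
    have "card {x\<in>P. lt le x w} < card {x\<in>P. lt le x u}"
      using psubset_card_mono[OF _ sub] po_fin[OF po] by auto
    with umin[OF w] show False unfolding m_def by simp
  qed
  with u show ?thesis by blast
qed

lemma upper_cover_below:
  assumes po: "poset_on P le" and aP: "a \<in> P" and yP: "y \<in> P" and ay: "lt le a y"
  shows "\<exists>u\<in>upper_covers P le a. le u y"
proof -
  let ?S = "{z\<in>P. lt le a z \<and> le z y}"
  have "y \<in> ?S" using yP ay po_refl[OF po yP] by auto
  then obtain u where u: "u \<in> ?S" and umin: "\<forall>w\<in>?S. \<not> lt le w u"
    using exists_minimal[OF po, of ?S] by blast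
  have "u \<in> upper_covers P le a"
    unfolding upper_covers_def
  proof (safe)
    show "u \<in> P" "lt le a u" using u by auto
    fix z assume zP: "z \<in> P" and az: "lt le a z" and zu: "lt le z u"
    have "le z y" using po_trans[OF po zP _ yP, of u] zu u by (auto simp: lt_def)
    with zP az have "z \<in> ?S" by auto
    with umin zu show False by blast
  qed
  with u show ?thesis by blast
qed

lemma irr_up_retr:
  assumes po: "poset_on P le" and aP: "a \<in> P" and c1: "card (upper_covers P le a) = 1"
  shows "retractable P le a"
proof -
  obtain b where ub: "upper_covers P le a = {b}" using c1 card_1_singletonE by blast
  have bP: "b \<in> P" and ab: "lt le a b" using ub unfolding upper_covers_def by auto
  have bna: "b \<noteq> a" using ab by (auto simp: lt_def)
  have above: "le b y" if "y \<in> P" "lt le a y" for y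
  proof -
    from upper_cover_below[OF po aP that] obtain u where "u \<in> upper_covers P le a" "le u y" by blast
    with ub show ?thesis by simp
  qed
  define r where "r x = (if x = a then b else x)" for x
  show ?thesis unfolding retractable_def
  proof (intro exI[of _ r] conjI ballI impI)
    fix x assume "x \<in> P" then show "r x \<in> P" using bP by (simp add: r_def)
  next
    fix x y assume xP: "x \<in> P" and yP: "y \<in> P" and xy: "le x y"
    show "le (r x) (r y)"
    proof (cases "x = a")
      case True
      then show ?thesis
      proof (cases "y = a")
        case True then show ?thesis using \<open>x = a\<close> by (simp add: r_def po_refl[OF po bP])
      next
        case False
        then have "lt le a y" using \<open>x = a\<close> xy by (simp add: lt_def)
        then have "le b y" using above yP by blast
        then show ?thesis using \<open>x = a\<close> False by (simp add: r_def)
      qed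
    next
      case False
      then show ?thesis
      proof (cases "y = a")
        case True
        have "le a b" using ab by (simp add: lt_def)
        then have "le x b" using po_trans[OF po xP aP bP] xy True by blast
        then show ?thesis using \<open>x \<noteq> a\<close> True by (simp add: r_def)
      next
        case False then show ?thesis using \<open>x \<noteq> a\<close> xy by (simp add: r_def)
      qed
    qed
  next
    fix x assume "x \<in> P" then show "r (r x) = r x" using bna by (simp add: r_def)
  next
    show "r ` P = P - {a}"
    proof
      show "r ` P \<subseteq> P - {a}" using bP bna by (auto simp: r_def)
      show "P - {a} \<subseteq> r ` P"
      proof
        fix z assume "z \<in> P - {a}"
        then have "r z = z" "z \<in> P" by (auto simp: r_def)
        then show "z \<in> r ` P" by force
      qed
    qed
  qed
qed

lemma po_flip: assumes po: "poset_on P le" shows "poset_on P (\<lambda>x y. le y x)"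
  unfolding poset_on_def
proof (intro conjI ballI impI)
  show "finite P" using po_fin[OF po] .
  fix x assume "x \<in> P" then show "le x x" by (rule po_refl[OF po])
next
  fix x y assume "x \<in> P" "y \<in> P" "le y x \<and> le x y"
  then show "x = y" using po_antisym[OF po] by blast
next
  fix x y z assume "x \<in> P" "y \<in> P" "z \<in> P" "le y x \<and> le z y"
  then show "le z x" using po_trans[OF po, of z y x] by blast
qed

lemma lt_flip: "lt (\<lambda>x y. le y x) x y = lt le y x"
  unfolding lt_def by blast

lemma lower_flip: "lower_covers P le a = upper_covers P (\<lambda>x y. le y x) a"
  unfolding lower_covers_def upper_covers_def lt_def by (intro Collect_cong) blast

lemma retr_flip: assumes "retractable P (\<lambda>x y. le y x) a" shows "retractable P le a"
proof -
  from assms obtain r where r1: "\<forall>x\<in>P. r x \<in> P"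
    and r2: "\<forall>x\<in>P. \<forall>y\<in>P. le y x \<longrightarrow> le (r y) (r x)"
    and r3: "\<forall>x\<in>P. r (r x) = r x" and r4: "r ` P = P - {a}"
    unfolding retractable_def by auto
  have r2': "\<forall>x\<in>P. \<forall>y\<in>P. le x y \<longrightarrow> le (r x) (r y)"
  proof (intro ballI impI)
    fix x y assume "x \<in> P" "y \<in> P" "le x y"
    then show "le (r x) (r y)" using r2 by blast
  qed
  show ?thesis unfolding retractable_def
    by (rule exI[of _ r], intro conjI, fact r1, fact r2', fact r3, fact r4)
qed

lemma irr_retr:
  assumes po: "poset_on P le" and aP: "a \<in> P" and irr: "irreducible_pt P le a"
  shows "retractable P le a"
proof -
  from irr have "card (lower_covers P le a) = 1 \<or> card (upper_covers P le a) = 1"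
    unfolding irreducible_pt_def .
  then show ?thesis
  proof
    assume "card (lower_covers P le a) = 1"
    then have "card (upper_covers P (\<lambda>x y. le y x) a) = 1" by (simp only: lower_flip)
    then have "retractable P (\<lambda>x y. le y x) a" by (rule irr_up_retr[OF po_flip[OF po] aP])
    then show ?thesis by (rule retr_flip)
  next
    assume "card (upper_covers P le a) = 1"
    then show ?thesis by (rule irr_up_retr[OF po aP])
  qed
qed

lemma not_nice_irr:
  assumes po: "poset_on P le" and nn: "\<not> nice P le"
  shows "\<exists>a\<in>P. irreducible_pt P le a"
proof -
  from nn obtain x y where xP: "x \<in> P" and yP: "y \<in> P" and xy: "lt le x y" and
    h: "{z\<in>P. lt le x z} \<subseteq> {z\<in>P. le y z} \<or> {z\<in>P. lt le z y} \<subseteq> {z\<in>P. le z x}"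
    unfolding nice_def by blast
  from h show ?thesis
  proof
    assume H: "{z\<in>P. lt le x z} \<subseteq> {z\<in>P. le y z}"
    have "upper_covers P le x = {y}"
    proof
      show "upper_covers P le x \<subseteq> {y}"
      proof
        fix u assume u: "u \<in> upper_covers P le x"
        then have uP: "u \<in> P" and xu: "lt le x u" and nb: "\<not> (\<exists>z\<in>P. lt le x z \<and> lt le z u)"
          unfolding upper_covers_def by auto
        have "le y u" using H uP xu by blast
        then show "u \<in> {y}" using nb xy yP by (auto simp: lt_def)
      qed
      have "\<not> (\<exists>z\<in>P. lt le x z \<and> lt le z y)"
      proof
        assume "\<exists>z\<in>P. lt le x z \<and> lt le z y"
        then obtain z where zP: "z \<in> P" and xz: "lt le x z" and zy: "lt le z y" by blast
        have "le y z" using H zP xz by blast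
        moreover have "le z y" "z \<noteq> y" using zy unfolding lt_def by auto
        ultimately show False using po_antisym[OF po zP yP] by blast
      qed
      then show "{y} \<subseteq> upper_covers P le x"
        unfolding upper_covers_def using yP xy by blast
    qed
    then have "card (upper_covers P le x) = 1" by simp
    then show ?thesis using xP unfolding irreducible_pt_def by blast
  next
    assume H: "{z\<in>P. lt le z y} \<subseteq> {z\<in>P. le z x}"
    have "lower_covers P le y = {x}"
    proof
      show "lower_covers P le y \<subseteq> {x}"
      proof
        fix u assume u: "u \<in> lower_covers P le y"
        then have uP: "u \<in> P" and xu: "lt le u y" and nb: "\<not> (\<exists>z\<in>P. lt le u z \<and> lt le z y)"
          unfolding lower_covers_def by auto
        have "le u x" using H uP xu by blast
        then show "u \<in> {x}" using nb xy xP by (auto simp: lt_def)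
      qed
      have "\<not> (\<exists>z\<in>P. lt le x z \<and> lt le z y)"
      proof
        assume "\<exists>z\<in>P. lt le x z \<and> lt le z y"
        then obtain z where zP: "z \<in> P" and xz: "lt le x z" and zy: "lt le z y" by blast
        have "le z x" using H zP zy by blast
        moreover have "le x z" "x \<noteq> z" using xz unfolding lt_def by auto
        ultimately show False using po_antisym[OF po zP xP] by blast
      qed
      then show "{x} \<subseteq> lower_covers P le y"
        unfolding lower_covers_def using xP xy by blast
    qed
    then have "card (lower_covers P le y) = 1" by simp
    then show ?thesis using yP unfolding irreducible_pt_def by blast
  qed
qed



lemma sec_poset: "section3 P le h c \<Longrightarrow> poset_on P le"
  unfolding section3_def by (elim conjE)
lemma sec_h: "section3 P le h c \<Longrightarrow> 1 \<le> h"
  unfolding section3_def by (elim conjE)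
lemma sec_P: "section3 P le h c \<Longrightarrow> P = {c k j | k j. k \<le> h \<and> j < 3}"
  unfolding section3_def by (elim conjE)
lemma sec_in: "section3 P le h c \<Longrightarrow> k \<le> h \<Longrightarrow> j < 3 \<Longrightarrow> c k j \<in> P"
  by (drule sec_P) blast
lemma sec_cases: "section3 P le h c \<Longrightarrow> x \<in> P \<Longrightarrow> (\<And>k j. k \<le> h \<Longrightarrow> j < 3 \<Longrightarrow> x = c k j \<Longrightarrow> thesis) \<Longrightarrow> thesis"
  by (drule sec_P) blast
lemma sec_step: "section3 P le h c \<Longrightarrow> k < h \<Longrightarrow> j < 3 \<Longrightarrow> lt le (c k j) (c (Suc k) j)"
proof -
  assume "section3 P le h c" "k < h" "j < 3"
  moreover have "\<forall>k<h. \<forall>j<3. lt le (c k j) (c (Suc k) j)"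
    using \<open>section3 P le h c\<close> unfolding section3_def by (elim conjE)
  ultimately show ?thesis by blast
qed
lemma sec_anti: "section3 P le h c \<Longrightarrow> k \<le> h \<Longrightarrow> i < 3 \<Longrightarrow> j < 3 \<Longrightarrow> i \<noteq> j \<Longrightarrow> \<not> le (c k i) (c k j)"
proof -
  assume "section3 P le h c" "k \<le> h" "i < 3" "j < 3" "i \<noteq> j"
  moreover have "\<forall>k\<le>h. \<forall>i<3. \<forall>j<3. i \<noteq> j \<longrightarrow> \<not> le (c k i) (c k j)"
    using \<open>section3 P le h c\<close> unfolding section3_def by (elim conjE)
  ultimately show ?thesis by blast
qed
lemma sec_rot1: "section3 P le h c \<Longrightarrow> lt le (c k i) (c l j) \<Longrightarrow> k \<le> h \<Longrightarrow> l \<le> h \<Longrightarrow> i < 3 \<Longrightarrow> j < 3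
   \<Longrightarrow> lt le (c k ((i + 1) mod 3)) (c l ((j + 1) mod 3))"
proof -
  assume "section3 P le h c" "lt le (c k i) (c l j)" "k \<le> h" "l \<le> h" "i < 3" "j < 3"
  moreover have "\<forall>k\<le>h. \<forall>l\<le>h. \<forall>i<3. \<forall>j<3.
        lt le (c k i) (c l j) \<longrightarrow> lt le (c k ((i + 1) mod 3)) (c l ((j + 1) mod 3))"
    using \<open>section3 P le h c\<close> unfolding section3_def by (elim conjE)
  ultimately show ?thesis by blast
qed
lemma sec_lev: "section3 P le h c \<Longrightarrow> k < h \<Longrightarrow> \<not> (\<forall>x\<in>level P le k. \<forall>y\<in>level P le (Suc k). lt le x y)"
proof -
  assume "section3 P le h c" "k < h"
  moreover have "\<forall>k<h. \<not> (\<forall>x\<in>level P le k. \<forall>y\<in>level P le (Suc k). lt le x y)"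
    using \<open>section3 P le h c\<close> unfolding section3_def by (elim conjE)
  ultimately show ?thesis by blast
qed

lemma sec_mono: assumes S: "section3 P le h c" and j: "j < 3"
  shows "k \<le> l \<Longrightarrow> l \<le> h \<Longrightarrow> le (c k j) (c l j)"
proof (induction l)
  case 0
  then show ?case using po_refl[OF sec_poset[OF S] sec_in[OF S _ j]] by simp
next
  case (Suc l)
  show ?case
  proof (cases "k = Suc l")
    case True
    then show ?thesis using po_refl[OF sec_poset[OF S] sec_in[OF S _ j]] Suc.prems by simp
  next
    case False
    then have kl: "k \<le> l" using Suc.prems by simp
    have "le (c k j) (c l j)" using Suc.IH kl Suc.prems by simp
    moreover have "le (c l j) (c (Suc l) j)" using sec_step[OF S _ j, of l] Suc.prems
      by (simp add: lt_def)
    ultimately show ?thesis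
      using po_trans[OF sec_poset[OF S] sec_in[OF S _ j] sec_in[OF S _ j] sec_in[OF S _ j], of k l "Suc l"]
        kl Suc.prems by simp
  qed
qed

lemma sec_mono_lt: assumes S: "section3 P le h c" and j: "j < 3" and kl: "k < l" and lh: "l \<le> h"
  shows "lt le (c k j) (c l j)"
proof -
  obtain m where m: "l = Suc m" using kl by (cases l) auto
  have "le (c k j) (c m j)" using sec_mono[OF S j, of k m] kl lh m by simp
  moreover have "lt le (c m j) (c l j)" using sec_step[OF S _ j, of m] lh m by simp
  ultimately show ?thesis
    using le_lt_trans[OF sec_poset[OF S] sec_in[OF S _ j] sec_in[OF S _ j] sec_in[OF S _ j], of k m l]
      kl lh m by simp
qed

lemma sec_lt_idx: assumes S: "section3 P le h c" and lt: "lt le (c k i) (c l j)"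
  and k: "k \<le> h" and l: "l \<le> h" and i: "i < 3" and j: "j < 3"
  shows "k < l"
proof (rule ccontr)
  assume "\<not> k < l"
  then have "l \<le> k" by simp
  then have "le (c l i) (c k i)" using sec_mono[OF S i] k by simp
  then have L: "lt le (c l i) (c l j)"
    using le_lt_trans[OF sec_poset[OF S] sec_in[OF S l i] sec_in[OF S k i] sec_in[OF S l j]] lt by simp
  show False
  proof (cases "i = j")
    case True then show False using L by (simp add: lt_def)
  next
    case False then show False using L sec_anti[OF S l i j] by (simp add: lt_def)
  qed
qed

lemma sec_inj: assumes S: "section3 P le h c" and eq: "c k i = c l j"
  and k: "k \<le> h" and l: "l \<le> h" and i: "i < 3" and j: "j < 3"
  shows "k = l \<and> i = j"
proof -
  have "k = l"
  proof (rule ccontr)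
    assume "k \<noteq> l"
    then consider "k < l" | "l < k" by linarith
    then show False
    proof cases
      case 1
      have "lt le (c k j) (c l j)" by (rule sec_mono_lt[OF S j 1 l])
      then have "lt le (c k j) (c k i)" using eq by simp
      then have "k < k" using sec_lt_idx[OF S _ k k j i] by blast
      then show False by simp
    next
      case 2
      have "lt le (c l i) (c k i)" by (rule sec_mono_lt[OF S i 2 k])
      then have "lt le (c l i) (c l j)" using eq by simp
      then have "l < l" using sec_lt_idx[OF S _ l l i j] by blast
      then show False by simp
    qed
  qed
  moreover have "i = j"
  proof (rule ccontr)
    assume "i \<noteq> j"
    then have "\<not> le (c k i) (c k j)" using sec_anti[OF S k i j] by simp
    moreover have "le (c k i) (c k j)" using eq \<open>k = l\<close> po_refl[OF sec_poset[OF S] sec_in[OF S k i]] by simp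
    ultimately show False by simp
  qed
  ultimately show ?thesis by simp
qed

lemma sec_rotd: assumes S: "section3 P le h c" and lt: "lt le (c k i) (c l j)"
  and k: "k \<le> h" and l: "l \<le> h" and i: "i < 3" and j: "j < 3"
  shows "lt le (c k ((i + d) mod 3)) (c l ((j + d) mod 3))"
proof (induction d)
  case 0 then show ?case using lt i j by simp
next
  case (Suc d)
  have "lt le (c k (((i + d) mod 3 + 1) mod 3)) (c l (((j + d) mod 3 + 1) mod 3))"
    by (rule sec_rot1[OF S Suc.IH k l]) simp_all
  moreover have "((i + d) mod 3 + 1) mod 3 = (i + d + 1) mod 3" by (rule mod_add_left_eq)
  moreover have "((j + d) mod 3 + 1) mod 3 = (j + d + 1) mod 3" by (rule mod_add_left_eq)
  ultimately show ?case by simp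
qed

lemma sec_rot: assumes S: "section3 P le h c" and lt: "lt le (c k x) (c l y)"
  and k: "k \<le> h" and l: "l \<le> h" and x: "x < 3" and y: "y < 3" and m: "m < 3" and m': "m' < 3"
  and eq: "(y + m) mod 3 = (m' + x) mod 3"
  shows "lt le (c k m) (c l m')"
proof -
  define d where "d = m + 3 - x"
  have x3: "x = 0 \<or> x = 1 \<or> x = 2" and y3: "y = 0 \<or> y = 1 \<or> y = 2"
    and m3: "m = 0 \<or> m = 1 \<or> m = 2" and m'3: "m' = 0 \<or> m' = 1 \<or> m' = 2"
    using x y m m' by auto
  have "(x + d) mod 3 = m \<and> (y + d) mod 3 = m'"
    using x3 y3 m3 m'3 eq unfolding d_def by (elim disjE) simp_all
  then show ?thesis using sec_rotd[OF S lt k l x y, of d] by simp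
qed



lemma lt3: "x < (3::nat) \<longleftrightarrow> x = 0 \<or> x = 1 \<or> x = 2" by auto

lemma ar1: "i < 3 \<Longrightarrow> j < 3 \<Longrightarrow> i \<noteq> j \<Longrightarrow> m < 3 \<Longrightarrow> m' < (3::nat) \<Longrightarrow>
  (i+m) mod 3 = (m'+i) mod 3 \<or> (i+m) mod 3 = (m'+j) mod 3 \<or> ((i+i+3-j) mod 3 + m) mod 3 = (m'+j) mod 3"
  unfolding lt3 by (elim disjE) simp_all
lemma ar2: "i < 3 \<Longrightarrow> j < (3::nat) \<Longrightarrow> (i + i) mod 3 = ((i+i+3-j) mod 3 + j) mod 3"
  unfolding lt3 by (elim disjE) simp_all
lemma ar3: "i < 3 \<Longrightarrow> j < (3::nat) \<Longrightarrow> (j + (i+i+3-j) mod 3) mod 3 = (i + i) mod 3"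
  unfolding lt3 by (elim disjE) simp_all
lemma ar4: "i < 3 \<Longrightarrow> j < 3 \<Longrightarrow> i \<noteq> j \<Longrightarrow> m < 3 \<Longrightarrow> m' < (3::nat) \<Longrightarrow>
  (i+m) mod 3 = (m'+i) mod 3 \<or> (j+m) mod 3 = (m'+i) mod 3 \<or> (j+m) mod 3 = (m' + (i+i+3-j) mod 3) mod 3"
  unfolding lt3 by (elim disjE) simp_all

lemma sec_minimals: assumes S: "section3 P le h c" and k: "k \<le> h"
  shows "minimals le {c l j | l j. k \<le> l \<and> l \<le> h \<and> j < 3} = {c k j | j. j < 3}"
proof
  show "minimals le {c l j | l j. k \<le> l \<and> l \<le> h \<and> j < 3} \<subseteq> {c k j | j. j < 3}"
  proof
    fix x assume x: "x \<in> minimals le {c l j | l j. k \<le> l \<and> l \<le> h \<and> j < 3}"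
    then obtain l j where kl: "k \<le> l" and lh: "l \<le> h" and j: "j < 3" and xe: "x = c l j"
      unfolding minimals_def by blast
    have nomin: "\<not> (\<exists>y\<in>{c l j | l j. k \<le> l \<and> l \<le> h \<and> j < 3}. lt le y x)"
      using x unfolding minimals_def by blast
    have "l = k"
    proof (rule ccontr)
      assume "l \<noteq> k"
      then have "k < l" using kl by simp
      then have "lt le (c k j) x" using sec_mono_lt[OF S j _ lh] xe by simp
      moreover have "c k j \<in> {c l j | l j. k \<le> l \<and> l \<le> h \<and> j < 3}" using k j by blast
      ultimately show False using nomin by blast
    qed
    then show "x \<in> {c k j | j. j < 3}" using xe j by blast
  qed
next
  show "{c k j | j. j < 3} \<subseteq> minimals le {c l j | l j. k \<le> l \<and> l \<le> h \<and> j < 3}"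
  proof
    fix x assume "x \<in> {c k j | j. j < 3}"
    then obtain j where j: "j < 3" and xe: "x = c k j" by blast
    have "\<not> (\<exists>y\<in>{c l j | l j. k \<le> l \<and> l \<le> h \<and> j < 3}. lt le y x)"
    proof
      assume "\<exists>y\<in>{c l j | l j. k \<le> l \<and> l \<le> h \<and> j < 3}. lt le y x"
      then obtain l j' where kl: "k \<le> l" and lh: "l \<le> h" and j': "j' < 3" and yx: "lt le (c l j') x"
        by blast
      have "l < k" using sec_lt_idx[OF S _ lh k j' j] yx xe by simp
      then show False using kl by simp
    qed
    moreover have "x \<in> {c l j | l j. k \<le> l \<and> l \<le> h \<and> j < 3}" using k j xe by blast
    ultimately show "x \<in> minimals le {c l j | l j. k \<le> l \<and> l \<le> h \<and> j < 3}"
      unfolding minimals_def by blast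
  qed
qed

lemma sec_rest: assumes S: "section3 P le h c"
  shows "k \<le> h \<Longrightarrow> rest P le k = {c l j | l j. k \<le> l \<and> l \<le> h \<and> j < 3}"
proof (induction k)
  case 0
  have "P = {c l j | l j. 0 \<le> l \<and> l \<le> h \<and> j < 3}" using sec_P[OF S] by simp
  then show ?case by (simp only: rest.simps)
next
  case (Suc k)
  then have k: "k \<le> h" by simp
  have "rest P le (Suc k) = {c l j | l j. k \<le> l \<and> l \<le> h \<and> j < 3} - {c k j | j. j < 3}"
    using Suc.IH[OF k] sec_minimals[OF S k] by simp
  also have "\<dots> = {c l j | l j. Suc k \<le> l \<and> l \<le> h \<and> j < 3}"
  proof
    show "{c l j | l j. k \<le> l \<and> l \<le> h \<and> j < 3} - {c k j | j. j < 3} \<subseteq> {c l j | l j. Suc k \<le> l \<and> l \<le> h \<and> j < 3}"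
    proof
      fix x assume x: "x \<in> {c l j | l j. k \<le> l \<and> l \<le> h \<and> j < 3} - {c k j | j. j < 3}"
      then obtain l j where kl: "k \<le> l" and lh: "l \<le> h" and j: "j < 3" and xe: "x = c l j" by blast
      have "l \<noteq> k" using x xe j by blast
      then have "Suc k \<le> l" using kl by simp
      then show "x \<in> {c l j | l j. Suc k \<le> l \<and> l \<le> h \<and> j < 3}" using lh j xe
        by (intro CollectI exI[of _ l] exI[of _ j]) simp
    qed
    show "{c l j | l j. Suc k \<le> l \<and> l \<le> h \<and> j < 3} \<subseteq> {c l j | l j. k \<le> l \<and> l \<le> h \<and> j < 3} - {c k j | j. j < 3}"
    proof
      fix x assume "x \<in> {c l j | l j. Suc k \<le> l \<and> l \<le> h \<and> j < 3}"
      then obtain l j where kl: "Suc k \<le> l" and lh: "l \<le> h" and j: "j < 3" and xe: "x = c l j" by blast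
      have "x \<notin> {c k j | j. j < 3}"
      proof
        assume "x \<in> {c k j | j. j < 3}"
        then obtain j' where j': "j' < 3" and e0: "x = c k j'" by blast
        have e: "c l j = c k j'" using xe e0 by simp
        have "l = k" using sec_inj[OF S e lh k j j'] by simp
        then show False using kl by simp
      qed
      moreover have "x \<in> {c l j | l j. k \<le> l \<and> l \<le> h \<and> j < 3}" using kl lh j xe
        by (intro CollectI exI[of _ l] exI[of _ j]) simp
      ultimately show "x \<in> {c l j | l j. k \<le> l \<and> l \<le> h \<and> j < 3} - {c k j | j. j < 3}" by blast
    qed
  qed
  finally show ?case .
qed

lemma sec_level: assumes S: "section3 P le h c" and k: "k \<le> h"
  shows "level P le k = {c k j | j. j < 3}"
  unfolding level_def using sec_rest[OF S k] sec_minimals[OF S k] by simp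



lemma sec_rows_contra: assumes S: "section3 P le h c" and k0: "k0 < h"
  and all: "\<And>m m'. m < 3 \<Longrightarrow> m' < 3 \<Longrightarrow> lt le (c k0 m) (c (Suc k0) m')"
  shows False
proof -
  have L1: "level P le k0 = {c k0 j | j. j < 3}" using sec_level[OF S] k0 by simp
  have L2: "level P le (Suc k0) = {c (Suc k0) j | j. j < 3}" using sec_level[OF S] k0 by simp
  have "\<forall>x\<in>level P le k0. \<forall>y\<in>level P le (Suc k0). lt le x y"
  proof (intro ballI)
    fix x y assume "x \<in> level P le k0" "y \<in> level P le (Suc k0)"
    then obtain m m' where "m < 3" "m' < 3" "x = c k0 m" "y = c (Suc k0) m'" using L1 L2 by blast
    then show "lt le x y" using all by simp
  qed
  then show False using sec_lev[OF S k0] by blast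
qed

lemma sec_core:
  assumes S: "section3 P le h c" and aP: "a \<in> P" and bP: "b \<in> P"
    and nab: "\<not> le a b" and nba: "\<not> le b a"
    and up: "\<forall>z\<in>P. lt le a z \<longrightarrow> le b z" and dn: "\<forall>z\<in>P. lt le z a \<longrightarrow> le z b"
  shows False
proof -
  have po: "poset_on P le" by (rule sec_poset[OF S])
  obtain k i where k: "k \<le> h" and i: "i < 3" and ae: "a = c k i" using sec_cases[OF S aP] by blast
  obtain l j where l: "l \<le> h" and j: "j < 3" and be: "b = c l j" using sec_cases[OF S bP] by blast
  have lt_to: "lt le b z" if zP: "z \<in> P" and az: "lt le a z" for z
  proof -
    have "le b z" using up zP az by blast
    moreover have "b \<noteq> z" using az nab unfolding lt_def by blast
    ultimately show ?thesis unfolding lt_def by blast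
  qed
  have lt_fr: "lt le z b" if zP: "z \<in> P" and az: "lt le z a" for z
  proof -
    have "le z b" using dn zP az by blast
    moreover have "b \<noteq> z" using az nba unfolding lt_def by blast
    ultimately show ?thesis unfolding lt_def by blast
  qed
  have aref: "le a a" by (rule po_refl[OF po aP])
  show False
  proof (cases "k < h")
    case True
    have U: "lt le (c k i) (c (Suc k) i)" by (rule sec_step[OF S True i])
    have UP: "c (Suc k) i \<in> P" using sec_in[OF S _ i] True by simp
    have bU: "lt le (c l j) (c (Suc k) i)" using lt_to[OF UP] U ae be by simp
    have lk1: "l < Suc k" using sec_lt_idx[OF S bU l _ j i] True by simp
    have ji: "j \<noteq> i"
    proof
      assume "j = i"
      then have "le b a" using sec_mono[OF S i, of l k] lk1 k ae be by simp
      then show False using nba by simp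
    qed
    have kl: "k \<le> l"
    proof (cases k)
      case 0 then show ?thesis by simp
    next
      case (Suc k')
      have D: "lt le (c k' i) a" using sec_step[OF S _ i, of k'] Suc k ae by simp
      have DP: "c k' i \<in> P" using sec_in[OF S _ i] Suc k by simp
      have "lt le (c k' i) (c l j)" using lt_fr[OF DP D] be by simp
      then have "k' < l" using sec_lt_idx[OF S _ _ l i j] Suc k by simp
      then show ?thesis using Suc by simp
    qed
    have lk: "l = k" using kl lk1 by simp
    define i' where "i' = (i + i + 3 - j) mod 3"
    have i': "i' < 3" unfolding i'_def by simp
    have kh: "Suc k \<le> h" using True by simp
    have p2: "lt le (c k j) (c (Suc k) i)" using bU lk by simp
    have p3: "lt le (c k i) (c (Suc k) i')"
      by (rule sec_rot[OF S p2 k kh j i i i']) (unfold i'_def, rule ar2[OF i j])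
    have p3P: "c (Suc k) i' \<in> P" using sec_in[OF S kh i'] .
    have p4: "lt le (c k j) (c (Suc k) i')" using lt_to[OF p3P] p3 ae be lk by simp
    have all: "lt le (c k m) (c (Suc k) m')" if m: "m < 3" and m': "m' < 3" for m m'
    proof -
      from ar1[OF i j _ m m'] ji
      consider "(i+m) mod 3 = (m'+i) mod 3" | "(i+m) mod 3 = (m'+j) mod 3" | "(i'+m) mod 3 = (m'+j) mod 3"
        unfolding i'_def by auto
      then show ?thesis
      proof cases
        case 1 then show ?thesis by (rule sec_rot[OF S U k kh i i m m'])
      next
        case 2 then show ?thesis by (rule sec_rot[OF S p2 k kh j i m m'])
      next
        case 3 then show ?thesis by (rule sec_rot[OF S p4 k kh j i' m m'])
      qed
    qed
    show False by (rule sec_rows_contra[OF S True all])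
  next
    case False
    then have kh: "k = h" using k by simp
    have h1: "1 \<le> h" by (rule sec_h[OF S])
    define k0 where "k0 = h - 1"
    have k0h: "k0 < h" and sk0: "Suc k0 = h" and k0le: "k0 \<le> h" using h1 unfolding k0_def by auto
    have D: "lt le (c k0 i) (c h i)" using sec_step[OF S k0h i] sk0 by simp
    have DP: "c k0 i \<in> P" by (rule sec_in[OF S k0le i])
    have Db: "lt le (c k0 i) (c l j)" using lt_fr[OF DP] D ae be kh by simp
    have "k0 < l" using sec_lt_idx[OF S Db k0le l i j] .
    then have lh: "l = h" using l sk0 by simp
    have ji: "j \<noteq> i"
    proof
      assume "j = i"
      then have "a = b" using ae be lh kh by simp
      then show False using nab aref by simp
    qed
    define i' where "i' = (i + i + 3 - j) mod 3"
    have i': "i' < 3" unfolding i'_def by simp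
    have hh: "h \<le> h" by simp
    have q2: "lt le (c k0 i) (c h j)" using Db lh by simp
    have q3: "lt le (c k0 i') (c h i)"
      by (rule sec_rot[OF S q2 k0le hh i j i' i]) (unfold i'_def, rule ar3[OF i j])
    have q3P: "c k0 i' \<in> P" by (rule sec_in[OF S k0le i'])
    have q4: "lt le (c k0 i') (c h j)" using lt_fr[OF q3P] q3 ae be lh kh by simp
    have all: "lt le (c k0 m) (c (Suc k0) m')" if m: "m < 3" and m': "m' < 3" for m m'
    proof -
      from ar4[OF i j _ m m'] ji
      consider "(i+m) mod 3 = (m'+i) mod 3" | "(j+m) mod 3 = (m'+i) mod 3" | "(j+m) mod 3 = (m'+i') mod 3"
        unfolding i'_def by auto
      then have "lt le (c k0 m) (c h m')"
      proof cases
        case 1 then show ?thesis by (rule sec_rot[OF S D k0le hh i i m m'])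
      next
        case 2 then show ?thesis by (rule sec_rot[OF S q2 k0le hh i j m m'])
      next
        case 3 then show ?thesis by (rule sec_rot[OF S q4 k0le hh i' j m m'])
      qed
      then show ?thesis using sk0 by simp
    qed
    show False by (rule sec_rows_contra[OF S k0h all])
  qed
qed

lemma sec_retr_not_nice:
  assumes S: "section3 P le h c" and aP: "a \<in> P" and R: "retractable P le a"
  shows "\<not> nice P le"
proof
  assume N: "nice P le"
  have po: "poset_on P le" by (rule sec_poset[OF S])
  from R obtain r where r1: "\<forall>x\<in>P. r x \<in> P"
    and r2: "\<forall>x\<in>P. \<forall>y\<in>P. le x y \<longrightarrow> le (r x) (r y)"
    and r3: "\<forall>x\<in>P. r (r x) = r x" and r4: "r ` P = P - {a}"
    unfolding retractable_def by blast
  define b where "b = r a"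
  have bPa: "b \<in> P - {a}" using r4 aP unfolding b_def by blast
  then have bP: "b \<in> P" and bna: "b \<noteq> a" by auto
  have fixr: "r z = z" if "z \<in> P" "z \<noteq> a" for z
  proof -
    from that r4 have "z \<in> r ` P" by blast
    then obtain w where "w \<in> P" "z = r w" by blast
    then show ?thesis using r3 by simp
  qed
  have up: "\<forall>z\<in>P. lt le a z \<longrightarrow> le b z"
  proof (intro ballI impI)
    fix z assume zP: "z \<in> P" and az: "lt le a z"
    then have "le (r a) (r z)" using r2 aP unfolding lt_def by blast
    moreover have "r z = z" using fixr zP az unfolding lt_def by blast
    ultimately show "le b z" unfolding b_def by simp
  qed
  have dn: "\<forall>z\<in>P. lt le z a \<longrightarrow> le z b"
  proof (intro ballI impI)
    fix z assume zP: "z \<in> P" and az: "lt le z a"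
    then have "le (r z) (r a)" using r2 aP unfolding lt_def by blast
    moreover have "r z = z" using fixr zP az unfolding lt_def by blast
    ultimately show "le z b" unfolding b_def by simp
  qed
  show False
  proof (cases "le a b")
    case True
    then have ab: "lt le a b" using bna unfolding lt_def by blast
    have "{z\<in>P. lt le a z} \<subseteq> {z\<in>P. le b z}" using up by blast
    moreover have "\<not> ({z\<in>P. lt le a z} \<subseteq> {z\<in>P. le b z})" using N aP bP ab unfolding nice_def by blast
    ultimately show False by blast
  next
    case False
    show False
    proof (cases "le b a")
      case True
      then have ba: "lt le b a" using bna unfolding lt_def by blast
      have "{z\<in>P. lt le z a} \<subseteq> {z\<in>P. le z b}" using dn by blast
      moreover have "\<not> ({z\<in>P. lt le z a} \<subseteq> {z\<in>P. le z b})" using N aP bP ba unfolding nice_def by blast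
      ultimately show False by blast
    next
      case False2: False
      show False by (rule sec_core[OF S aP bP False False2 up dn])
    qed
  qed
qed

theorem proposition3p3:
  fixes P :: "'a set" and le :: "'a \<Rightarrow> 'a \<Rightarrow> bool" and h :: nat and c :: "nat \<Rightarrow> nat \<Rightarrow> 'a"
  assumes "section3 P le h c"
  shows "(nice P le \<longleftrightarrow> (\<forall>a\<in>P. \<not> retractable P le a)) \<and>
         ((\<forall>a\<in>P. \<not> retractable P le a) \<longleftrightarrow> (\<forall>a\<in>P. \<not> irreducible_pt P le a))"
proof -
  have po: "poset_on P le" by (rule sec_poset[OF assms])
  have A: "nice P le \<Longrightarrow> (\<forall>a\<in>P. \<not> retractable P le a)"
    using sec_retr_not_nice[OF assms] by blast
  have B: "(\<forall>a\<in>P. \<not> retractable P le a) \<Longrightarrow> (\<forall>a\<in>P. \<not> irreducible_pt P le a)"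
    using irr_retr[OF po] by blast
  have C: "(\<forall>a\<in>P. \<not> irreducible_pt P le a) \<Longrightarrow> nice P le"
    using not_nice_irr[OF po] by blast
  show ?thesis using A B C by blast
qed


end
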